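(* Let $c\ge3$ be an integer and $K(t,t')=\frac{2c}{c+1}\cdot\frac{t'^{2/(c-1)}}{\sum_{i=1}^{t} i^{2/(c-1)}}\cdot\mathbf{1}[t\ge t']$ for positive integers $t,t'$. Then for all positive integers $t''<t$, $$\sum_{q=t''}^{t-1}K(q,t'')\ge c\left(1-\left(\frac{t''}{t}\right)^{2/(c-1)}\right).$$ *)

theory Defs
  imports Complex_Main
begin

definition kerK :: "nat \<Rightarrow> nat \<Rightarrow> nat \<Rightarrow> real" where
  "kerK c t t' = (2 * real c / (real c + 1)) *
     (real t' powr (2 / (real c - 1)) / (\<Sum>i=1..t. real i powr (2 / (real c - 1)))) *
     (if t \<ge> t' then 1 else 0)"

end

theory Submission imports Defs "HOL-Analysis.Analysis" begin
lemma powr_m1_mult: "z > 0 \<Longrightarrow> z powr (a-1) * (z::real) = z powr a"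
proof -
  assume z: "z > 0"
  have "z powr a = z powr ((a-1)+1)" by simp
  also have "... = z powr (a-1) * z powr 1" by (rule powr_add)
  also have "z powr 1 = z" using z by simp
  finally show ?thesis by simp
qed

lemma trap_y:
  fixes a y :: real
  assumes a: "0 < a" "a \<le> 1" and y: "0 < y" "y \<le> 1"
  shows "(1 + y powr a) * (1 - y) / 2 \<le> (1 - y powr (a+1)) / (a+1)"
proof -
  define \<psi> where "\<psi> z = (1 - z powr (a+1)) / (a+1) - (1 + z powr a) * (1 - z) / 2" for z :: real
  define \<psi>' where "\<psi>' z = (1 - (1-a) * z powr a - a * z powr (a-1)) / 2" for z :: real
  have der: "(\<psi> has_real_derivative \<psi>' z) (at z)" if "z \<in> {y..1}" for z
  proof -
    have z: "z > 0" using that y by auto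
    have "(\<psi> has_real_derivative
       (- ((a+1) * z powr (a+1-1)) / (a+1) - ((a * z powr (a-1)) * (1-z) + (1 + z powr a) * (-1)) / 2)) (at z)"
      unfolding \<psi>_def using z
      by (auto intro!: derivative_eq_intros)
    moreover have "- ((a+1) * z powr (a+1-1)) / (a+1) - ((a * z powr (a-1)) * (1-z) + (1 + z powr a) * (-1)) / 2 = \<psi>' z"
    proof -
      have "z powr (a-1) * z = z powr a" using z by (rule powr_m1_mult)
      thus ?thesis unfolding \<psi>'_def using a by (simp add: field_simps)
    qed
    ultimately show ?thesis by simp
  qed
  have neg: "\<psi>' z \<le> 0" if "z \<in> {y..1}" for z
  proof -
    have z: "z > 0" using that y by auto
    have "z powr (1-a) * 1 powr a \<le> (1-a) * z + a * 1"
      using Youngs_inequality_0[of "1-a" a z 1] a z by simp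
    hence "z powr (1-a) \<le> (1-a) * z + a" by simp
    hence "z powr (a-1) * z powr (1-a) \<le> z powr (a-1) * ((1-a) * z + a)"
      by (simp add: mult_left_mono)
    moreover have "z powr (a-1) * z powr (1-a) = 1" using z by (simp add: powr_add[symmetric])
    moreover have "z powr (a-1) * z = z powr a" using z by (rule powr_m1_mult)
    ultimately have "1 \<le> (1-a) * z powr a + a * z powr (a-1)" by (simp add: algebra_simps)
    thus ?thesis unfolding \<psi>'_def by simp
  qed
  have "\<psi> 1 \<le> \<psi> y"
    by (rule deriv_nonpos_imp_antimono[OF der neg]) (use y in auto)
  moreover have "\<psi> 1 = 0" unfolding \<psi>_def by simp
  ultimately show ?thesis unfolding \<psi>_def by simp
qed

lemma keyX:
  fixes a x :: real
  assumes a: "0 < a" "a \<le> 1" and x: "0 \<le> x" "x \<le> 1"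
  shows "(1 + (1-a)*x*(1-x)/2) / (1 + (a+1)*x/2 - (1-a)*x^2/2) \<le> (1+x) powr (-a)"
proof -
  define P where "P z = 1 + (a+1)*z/2 - (1-a)*z^2/2" for z :: real
  define Q where "Q z = 1 + (1-a)*z*(1-z)/2" for z :: real
  define E where "E z = (1-a) * z^2 * (-3/2 - z/2 + (1-a)*(1-z)^2/4 + a*(1-z)/2)" for z :: real
  have Ppos: "P z \<ge> 1" if "z \<in> {0..x}" for z
  proof -
    have "(1-a)*z^2 \<le> (1-a)*z" using that x a by (intro mult_left_mono) (auto simp: power2_eq_square intro: mult_left_le)
    moreover have "(1-a)*z \<le> (a+1)*z" using that a by (intro mult_right_mono) auto
    ultimately have "(1-a)*z^2/2 \<le> (a+1)*z/2" by linarith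
    thus ?thesis unfolding P_def by linarith
  qed
  have Qpos: "Q z \<ge> 1" if "z \<in> {0..x}" for z
    unfolding Q_def using that a x by auto
  have Eneg: "E z \<le> 0" if "z \<in> {0..x}" for z
  proof -
    have "(1-z)^2 \<le> 1" using that x by (intro power_le_one) auto
    hence "(1-a)*(1-z)^2 \<le> 1" using that a by (intro mult_le_one) auto
    hence "(1-a)*(1-z)^2/4 \<le> 1/4" by simp
    moreover have "a*(1-z)/2 \<le> 1/2" using that a x
      by (auto simp: mult_le_one)
    ultimately have "-3/2 - z/2 + (1-a)*(1-z)^2/4 + a*(1-z)/2 \<le> 0" using that by auto
    moreover have "(1-a) * z^2 \<ge> 0" using a by auto
    ultimately show ?thesis unfolding E_def by (simp add: mult_nonneg_nonpos)
  qed
  define \<phi> where "\<phi> z = ln (Q z) - ln (P z) + a * ln (1+z)" for z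
  define \<phi>' where "\<phi>' z = ((1-a)*(1-2*z)/2) / Q z - ((a+1)/2 - (1-a)*z) / P z + a / (1+z)" for z
  have der: "(\<phi> has_real_derivative \<phi>' z) (at z)" if "z \<in> {0..x}" for z
  proof -
    have p: "P z > 0" "Q z > 0" "1 + z > 0" using Ppos[OF that] Qpos[OF that] that by auto
    have Pe: "P = (\<lambda>z. 1 + (a+1)/2*z - (1-a)/2*z^2)"
      unfolding P_def by (rule ext) (simp add: power2_eq_square field_simps)
    have dP: "(P has_real_derivative ((a+1)/2 - (1-a)*z)) (at z)" unfolding Pe
      by (auto intro!: derivative_eq_intros simp: field_simps)
    have Qe: "Q = (\<lambda>z. 1 + (1-a)/2*z - (1-a)/2*z^2)"
      unfolding Q_def by (rule ext) (simp add: power2_eq_square field_simps)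
    have dQ: "(Q has_real_derivative ((1-a)*(1-2*z)/2)) (at z)" unfolding Qe
      by (auto intro!: derivative_eq_intros simp: field_simps)
    have l1: "((\<lambda>z. ln (Q z)) has_real_derivative (1 / Q z * ((1-a)*(1-2*z)/2))) (at z)"
      by (rule DERIV_chain2[OF DERIV_ln_divide[OF p(2)] dQ])
    have l2: "((\<lambda>z. ln (P z)) has_real_derivative (1 / P z * ((a+1)/2 - (1-a)*z))) (at z)"
      by (rule DERIV_chain2[OF DERIV_ln_divide[OF p(1)] dP])
    have l3: "((\<lambda>z. ln (1+z)) has_real_derivative (1 / (1+z) * 1)) (at z)"
      by (rule DERIV_chain2[where g="\<lambda>z. 1+z", OF DERIV_ln_divide[OF p(3)]]) (auto intro!: derivative_eq_intros)
    have "(\<phi> has_real_derivative (1 / Q z * ((1-a)*(1-2*z)/2) - 1 / P z * ((a+1)/2 - (1-a)*z) + a * (1 / (1+z) * 1))) (at z)"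
      unfolding \<phi>_def by (intro DERIV_add DERIV_diff DERIV_cmult l1 l2 l3)
    thus ?thesis unfolding \<phi>'_def by (simp add: mult.commute)
  qed
  have neg: "\<phi>' z \<le> 0" if "z \<in> {0..x}" for z
  proof -
    have p: "P z > 0" "Q z > 0" "1 + z > 0" using Ppos[OF that] Qpos[OF that] that by auto
    have poly: "((1-a)*(1-2*z)/2) * P z * (1+z) - ((a+1)/2 - (1-a)*z) * Q z * (1+z) + a * P z * Q z = a * E z"
      unfolding E_def P_def Q_def by (simp add: field_simps power2_eq_square power3_eq_cube)
    have "\<phi>' z = (((1-a)*(1-2*z)/2) * P z * (1+z) - ((a+1)/2 - (1-a)*z) * Q z * (1+z) + a * P z * Q z) / (P z * Q z * (1+z))"
      using p unfolding \<phi>'_def by (simp add: field_simps)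
    also have "... = a * E z / (P z * Q z * (1+z))" by (simp only: poly)
    also have "... \<le> 0" using p Eneg[OF that] a
      by (intro divide_nonpos_pos mult_nonneg_nonpos) auto
    finally show ?thesis .
  qed
  have "\<phi> x \<le> \<phi> 0"
    by (rule deriv_nonpos_imp_antimono[OF der neg]) (use x in auto)
  moreover have "\<phi> 0 = 0" unfolding \<phi>_def P_def Q_def by simp
  ultimately have "ln (Q x) - ln (P x) \<le> - a * ln (1+x)" unfolding \<phi>_def by simp
  moreover have px: "P x > 0" "Q x > 0" using Ppos Qpos x by force+
  ultimately have "ln (Q x / P x) \<le> - a * ln (1+x)" by (simp add: ln_div)
  hence "Q x / P x \<le> exp (- a * ln (1+x))"
    using px by (metis divide_pos_pos exp_ln exp_le_cancel_iff)
  also have "... = (1+x) powr (-a)" using x by (simp add: powr_def)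
  finally show ?thesis unfolding P_def Q_def .
qed

lemma L1: "(A::real) > 0 \<Longrightarrow> (q::real) > 0 \<Longrightarrow> (A * (q+1)) * ((1 + C / A) * (1/(q+1)) / 2) = (A + C)/2"
proof -
  assume h: "A > 0" "q > 0"
  have "A * q > 0" using h by simp
  with h have "A \<noteq> 0" "q + 1 \<noteq> 0" "A + A * q \<noteq> 0" "A*2 + A*(q*2) \<noteq> 0" by linarith+
  then show ?thesis by (simp add: field_simps)
qed
lemma L2: "(A::real) > 0 \<Longrightarrow> (q::real) > 0 \<Longrightarrow> a > 0 \<Longrightarrow> (A * (q+1)) * ((1 - C / (A * (q+1))) / (a+1)) = (A * (q+1) - C)/(a+1)"
proof -
  assume h: "A > 0" "q > 0" "a > 0"
  have nz: "A * (q+1) \<noteq> 0" using h by simp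
  have "(A * (q+1)) * (1 - C / (A * (q+1))) = A * (q+1) - C"
    using nz by (simp add: right_diff_distrib)
  thus ?thesis by (metis times_divide_eq_right)
qed
lemma trap_q:
  fixes a q :: real
  assumes a: "0 < a" "a \<le> 1" and q: "0 < q"
  shows "((q+1) powr a + q powr a)/2 \<le> ((q+1) powr (a+1) - q powr (a+1))/(a+1)"
proof -
  define y where "y = q/(q+1)"
  have y: "0 < y" "y \<le> 1" using q by (auto simp: y_def)
  note h = trap_y[OF a y]
  have e1: "y powr a = q powr a / (q+1) powr a" unfolding y_def using q by (simp add: powr_divide)
  have e2: "y powr (a+1) = q powr (a+1) / (q+1) powr (a+1)" unfolding y_def using q by (simp add: powr_divide)
  have e3: "(q+1) powr (a+1) = (q+1) powr a * (q+1)" using q by (simp add: powr_add)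
  have e4: "1 - y = 1/(q+1)" unfolding y_def using q by (simp add: field_simps)
  have pa: "(q+1) powr a > 0" using q by simp
  from h have "(1 + q powr a / (q+1) powr a) * (1/(q+1)) / 2 \<le> (1 - q powr (a+1) / ((q+1) powr a * (q+1))) / (a+1)"
    by (simp only: e1 e2 e3 e4)
  hence "((q+1) powr a * (q+1)) * ((1 + q powr a / (q+1) powr a) * (1/(q+1)) / 2)
      \<le> ((q+1) powr a * (q+1)) * ((1 - q powr (a+1) / ((q+1) powr a * (q+1))) / (a+1))"
    using pa q by (intro mult_left_mono) auto
  moreover have "((q+1) powr a * (q+1)) * ((1 + q powr a / (q+1) powr a) * (1/(q+1)) / 2) = ((q+1) powr a + q powr a)/2"
    using L1 pa q by blast
  moreover have "((q+1) powr a * (q+1)) * ((1 - q powr (a+1) / ((q+1) powr a * (q+1))) / (a+1)) = ((q+1) powr a * (q+1) - q powr (a+1))/(a+1)"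
    using L2 pa q a by blast
  ultimately show ?thesis by (simp only: e3)
qed

lemma base_eq: "(0::real) < a \<Longrightarrow> 1/(a+1) + 1/2 - (1-a)/(2*(a+1)) = 1"
proof -
  assume "0 < a"
  define b where "b = a + 1"
  have b: "b \<noteq> 0" using \<open>0<a\<close> by (simp add: b_def)
  have "a = b - 1" by (simp add: b_def)
  hence "1/(a+1) + 1/2 - (1-a)/(2*(a+1)) = 1/b + 1/2 - (2-b)/(2*b)" by simp
  also have "... = 1" using b by (simp add: field_simps)
  finally show ?thesis .
qed
lemma BX_eq: "(0::real) < Aq \<Longrightarrow> 0 < q \<Longrightarrow> 0 < a \<Longrightarrow> (a+1) * (Aq * q/(a+1) + Aq/2 - (1-a)/(2*(a+1))) * (1/q) / Aq = 1 + (a+1)*(1/q)/2 - (1-a)*(1/q)/(2*Aq)"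
proof -
  assume h: "(0::real) < Aq" "0 < q" "0 < a"
  define b where "b = a + 1"
  have b: "b \<noteq> 0" using h by (simp add: b_def)
  have "a = b - 1" by (simp add: b_def)
  hence "(a+1) * (Aq * q/(a+1) + Aq/2 - (1-a)/(2*(a+1))) * (1/q) / Aq = b * (Aq * q/b + Aq/2 - (2-b)/(2*b)) * (1/q) / Aq" by simp
  also have "... = 1 + b*(1/q)/2 - (2-b)*(1/q)/(2*Aq)" using b h by (simp add: field_simps)
  finally show ?thesis using \<open>a = b - 1\<close> by simp
qed

lemma S_le_B:
  fixes a :: real
  assumes a: "0 < a" "a \<le> 1" and q: "1 \<le> q"
  shows "(\<Sum>i=1..q. real i powr a) \<le> real q powr (a+1)/(a+1) + real q powr a/2 - (1-a)/(2*(a+1))"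
  using q
proof (induction q rule: nat_induct_at_least)
  case base
  have "(1::real) = 1/(a+1) + 1/2 - (1-a)/(2*(a+1))" using base_eq a by simp
  thus ?case by simp
next
  case (Suc n)
  have n: "real n > 0" using Suc by simp
  have "(\<Sum>i=1..Suc n. real i powr a) = (\<Sum>i=1..n. real i powr a) + (real n + 1) powr a"
    by (simp add: add.commute)
  also have "... \<le> real n powr (a+1)/(a+1) + real n powr a/2 - (1-a)/(2*(a+1)) + (real n + 1) powr a"
    using Suc by simp
  also have "... \<le> (real n + 1) powr (a+1)/(a+1) + (real n + 1) powr a/2 - (1-a)/(2*(a+1))"
  proof -
    have "((real n + 1) powr a + real n powr a)/2 \<le> (real n + 1) powr (a+1)/(a+1) - real n powr (a+1)/(a+1)"
      using trap_q[OF a n] by (simp only: diff_divide_distrib)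
    thus ?thesis by (simp add: add_divide_distrib)
  qed
  finally show ?case by (simp add: add.commute)
qed

lemma F_bound:
  fixes a q :: real
  assumes a: "0 < a" "a \<le> 1" and q: "1 \<le> q"
  shows "(a+1) * (1 / q powr a - 1 / (q+1) powr a) * (q powr (a+1)/(a+1) + q powr a/2 - (1-a)/(2*(a+1))) \<le> a"
proof -
  define x where "x = 1/q"
  define P where "P = 1 + (a+1)*x/2 - (1-a)*x^2/2"
  define Qx where "Qx = 1 + (1-a)*x*(1-x)/2"
  define Aq where "Aq = q powr a"
  define B where "B = q powr (a+1)/(a+1) + q powr a/2 - (1-a)/(2*(a+1))"
  have x: "0 < x" "x \<le> 1" using q by (auto simp: x_def)
  have qpos: "q > 0" using q by simp
  have Aq: "Aq > 0" using qpos by (simp add: Aq_def)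
  have qa1: "q powr (a+1) = Aq * q" using qpos by (simp add: Aq_def powr_add)
  have Aqle: "Aq \<le> q"
  proof -
    have "q powr a \<le> q powr 1" using q a by (intro powr_mono) auto
    thus ?thesis using qpos by (simp add: Aq_def)
  qed
  have Pge: "P \<ge> 1"
  proof -
    have "(1-a)*x^2 \<le> (1-a)*x" using x a by (intro mult_left_mono) (auto simp: power2_eq_square intro: mult_left_le)
    moreover have "(1-a)*x \<le> (a+1)*x" using x a by (intro mult_right_mono) auto
    ultimately have "(1-a)*x^2/2 \<le> (a+1)*x/2" by linarith
    thus ?thesis unfolding P_def by linarith
  qed
  have key: "Qx / P \<le> (1+x) powr (-a)" using keyX[OF a] x unfolding P_def Qx_def by auto
  have PQ: "P - Qx = a * x" unfolding P_def Qx_def by (simp add: field_simps power2_eq_square)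
  have q1: "(q+1) powr a = Aq * (1+x) powr a"
  proof -
    have "q + 1 = q * (1+x)" using qpos by (simp add: x_def field_simps)
    hence "(q+1) powr a = q powr a * (1+x) powr a" using qpos x by (simp add: powr_mult)
    thus ?thesis by (simp add: Aq_def)
  qed
  have ox: "(1+x) powr a > 0" using x by simp
  have "1 / (1+x) powr a = (1+x) powr (-a)" using x by (simp add: powr_minus_divide)
  hence "1 - 1/(1+x) powr a \<le> 1 - Qx / P" using key by simp
  also have "1 - Qx / P = a * x / P" using Pge PQ by (simp add: field_simps)
  finally have d1: "1 - 1/(1+x) powr a \<le> a * x / P" .
  have D: "1 / q powr a - 1 / (q+1) powr a = (1 - 1/(1+x) powr a) / Aq"
  proof -
    have "1 / q powr a - 1 / (q+1) powr a = 1/Aq - 1/(Aq * (1+x) powr a)" by (simp only: q1 Aq_def)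
    also have "... = (1 - 1/(1+x) powr a) / Aq" using Aq ox by (simp add: field_simps)
    finally show ?thesis .
  qed
  have Bnn: "B \<ge> 0"
  proof -
    have "q powr (a+1) \<ge> 1" using q a by (simp add: ge_one_powr_ge_zero)
    hence "q powr (a+1)/(a+1) \<ge> 1/(a+1)" using a by (simp add: divide_right_mono)
    moreover have "1/(a+1) \<ge> (1-a)/(2*(a+1))" using a by (simp add: field_simps)
    moreover have "q powr a \<ge> 0" by simp
    ultimately show ?thesis unfolding B_def by linarith
  qed
  have BX: "(a+1) * B * x / Aq \<le> P"
  proof -
    have e: "(a+1) * B * x / Aq = 1 + (a+1)*x/2 - (1-a)*x/(2*Aq)"
      unfolding B_def qa1 x_def using BX_eq[OF Aq qpos a(1)] by (simp add: Aq_def)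
    have "x \<le> 1/Aq" using Aqle Aq by (simp add: x_def frac_le)
    hence "(1-a) * x * x \<le> (1-a) * x * (1/Aq)" using a x by (intro mult_left_mono) auto
    hence "(1-a)*x^2/2 \<le> (1-a)*x/(2*Aq)" by (simp add: power2_eq_square)
    thus ?thesis unfolding e P_def by linarith
  qed
  have "(a+1) * (1 / q powr a - 1 / (q+1) powr a) * B = (a+1) * B * ((1 - 1/(1+x) powr a) / Aq)"
    by (simp add: D)
  also have "... \<le> (a+1) * B * ((a * x / P) / Aq)"
    using Bnn a Aq d1 by (intro mult_left_mono divide_right_mono) auto
  also have "... = a * (((a+1) * B * x / Aq) / P)" by (simp add: field_simps)
  also have "... \<le> a * 1"
  proof -
    have "((a+1) * B * x / Aq) / P \<le> P / P" using BX Pge by (intro divide_right_mono) auto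
    also have "P / P = 1" using Pge by simp
    finally show ?thesis using a by (intro mult_left_mono) auto
  qed
  finally show ?thesis unfolding B_def by simp
qed

lemma term_bound:
  fixes c q s :: nat
  assumes c: "c \<ge> 3" and s: "0 < s" and sq: "s \<le> q"
  shows "real c * real s powr (2 / (real c - 1)) * (1 / real q powr (2 / (real c - 1)) - 1 / (real q + 1) powr (2 / (real c - 1))) \<le> kerK c q s"
proof -
  define a where "a = 2 / (real c - 1)"
  have cr: "real c - 1 \<ge> 2" using c by simp
  have a: "0 < a" "a \<le> 1" using cr by (auto simp: a_def field_simps)
  have q1: "1 \<le> q" using s sq by simp
  define S where "S = (\<Sum>i=1..q. real i powr a)"
  define D where "D = 1 / real q powr a - 1 / (real q + 1) powr a"
  define B where "B = real q powr (a+1)/(a+1) + real q powr a/2 - (1-a)/(2*(a+1))"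
  have SB: "S \<le> B" unfolding S_def B_def using S_le_B[OF a q1] .
  have FB: "(a+1) * D * B \<le> a" unfolding D_def B_def using F_bound[OF a, of "real q"] q1 by simp
  have Spos: "S > 0"
  proof -
    have "S \<ge> real 1 powr a" unfolding S_def
      by (rule member_le_sum) (use q1 in auto)
    thus ?thesis by simp
  qed
  have Dpos: "D \<ge> 0"
  proof -
    have "real q powr a \<le> (real q + 1) powr a" using a q1 by (intro powr_mono2) auto
    hence "1 / (real q + 1) powr a \<le> 1 / real q powr a" using q1 a by (intro divide_left_mono) auto
    thus ?thesis unfolding D_def by simp
  qed
  have "(a+1) * D * S \<le> (a+1) * D * B" using SB Dpos a by (intro mult_left_mono) auto
  with FB have "(a+1) * D * S \<le> a" by linarith
  moreover have X: "(a+1) * S > 0" using Spos a by simp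
  ultimately have DS: "D \<le> a / ((a+1) * S)"
    by (subst pos_le_divide_eq[OF X]) (simp add: ac_simps)
  have ca: "real c * (a / (a+1)) = 2 * real c / (real c + 1)"
  proof -
    define d where "d = real c - 1"
    have d: "d \<noteq> 0" "d + 2 \<noteq> 0" "2 + d \<noteq> 0" using cr by (auto simp: d_def)
    have "(2/d)/(2/d+1) = 2/(d+2)" using d by (simp add: field_simps)
    moreover have "real c + 1 = d + 2" by (simp add: d_def)
    ultimately have "a / (a+1) = 2 / (real c + 1)" unfolding a_def d_def by simp
    thus ?thesis by simp
  qed
  have sa: "real s powr a \<ge> 0" by simp
  have "real c * real s powr a * D \<le> real c * real s powr a * (a / ((a+1) * S))"
    using DS sa by (intro mult_left_mono) auto
  also have "... = (real c * (a / (a+1))) * (real s powr a / S)" by (simp add: field_simps)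
  also have "... = kerK c q s" unfolding kerK_def ca using sq by (simp add: S_def a_def)
  finally show ?thesis unfolding D_def a_def .
qed

theorem mainTheorem9:
  fixes c t t'' :: nat
  assumes "c \<ge> 3" and "0 < t''" and "t'' < t"
  shows "(\<Sum>q=t''..t-1. kerK c q t'') \<ge> real c * (1 - (real t'' / real t) powr (2 / (real c - 1)))"
proof -
  define a where "a = 2 / (real c - 1)"
  define f where "f q = - (1 / real q powr a)" for q :: nat
  have tele: "(\<Sum>q=t''..t-1. f (Suc q) - f q) = f (Suc (t-1)) - f t''"
    by (rule sum_Suc_diff) (use assms in auto)
  have st: "Suc (t-1) = t" using assms by simp
  have tele2: "(\<Sum>q=t''..t-1. 1 / real q powr a - 1 / (real q + 1) powr a) = 1 / real t'' powr a - 1 / real t powr a"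
    using tele unfolding st f_def by (simp add: add.commute)
  have "real c * (1 - (real t'' / real t) powr a) = real c * real t'' powr a * (1 / real t'' powr a - 1 / real t powr a)"
    using assms by (simp add: powr_divide field_simps)
  also have "... = (\<Sum>q=t''..t-1. real c * real t'' powr a * (1 / real q powr a - 1 / (real q + 1) powr a))"
    unfolding tele2[symmetric] by (simp add: sum_distrib_left)
  also have "... \<le> (\<Sum>q=t''..t-1. kerK c q t'')"
    by (rule sum_mono) (use term_bound[OF assms(1,2)] in \<open>auto simp: a_def\<close>)
  finally show ?thesis unfolding a_def .
qed

end
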